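(* Let $K$ be a field of characteristic zero, $n\ge1$. Let $\mathcal L$ be the set of $n\times n$ matrices $B$ over $K$ of the form: for $1\le k\le n$ and $0\le i\le k-1$, the entry in row $i-k+n+1$ and column $k$ equals $b_{k,i}$, all entries above these positions (i.e. entries in row $a$, column $k$ with $a< n-k+1$) are $0$, and $b_{k,0}\ne 0$ for all $1\le k\le n$ (so $B$ is zero above the antidiagonal, with nonzero antidiagonal entries $b_{1,0},\dots,b_{n,0}$). Let $s_{k,i}$ be the coordinate function on $\mathcal L$ with $s_{k,i}(B)=b_{k,i}$; these are algebraically independent and $K(\mathcal L)=K(s_{k,i}:1\le k\le n,0\le i\le k-1)$. Order the $s_{k,i}$ as $$s_{1,0}<s_{2,0}<\dots<s_{n,0}<s_{2,1}<s_{3,2}<s_{3,1}<s_{4,3}<s_{4,2}<s_{4,1}<\dots<s_{n,n-1}<s_{n,n-2}<\dots<s_{n,1},$$ i.e. all $s_{k,0}$ first in increasing $k$, then for $k=2,\dots,n$ in turn the functions $s_{k,k-1},s_{k,k-2},\dots,s_{k,1}$. Let $\pi(J_{k,i})$ denote the restriction to $\mathcal L$ of the polynomial $J_{k,i}$ (defined in the context), regarded as an element of $K(\mathcal L)$. Then for every pair $(k,i)$ with $1\le k\le n$, $0\le i\le k-1$ there exist rational functions $\phi_{k,i}\neq 0$ and $\psi_{k,i}$ in the coordinate functions $s_{a,b}$ that are strictly smaller than $s_{k,i}$ in this order, such that $$\pi(J_{k,i})=\phi_{k,i}\,s_{k,i}+\psi_{k,i}.$$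
   Context: Let $M=\mathrm{Mat}(n,K)$ with standard coordinate functions $\{x_{ij}\}$, generic matrix $X=(x_{ij})$ and adjugate matrix $X^*=(x^*_{ij})$, $XX^*=X^*X=\det X\cdot E$. For $1\le k\le n$ and $0\le i\le k-1$, $J_{k,i}$ is the determinant of the $k\times k$ matrix whose first $k-i$ rows are the rows $n-k+i+1,\dots,n$ of $X$ restricted to columns $1,\dots,k$, and whose last $i$ rows are the rows $n-i+1,\dots,n$ of $X^*$ restricted to columns $1,\dots,k$. Note that on $\mathcal L$ the coordinate $x_{a,b}$ restricts to $s_{k,i}$ when $a=i-k+n+1$, $b=k$. *)

theory Defs
  imports "Jordan_Normal_Form.Determinant"
begin

text \<open>Points of \<open>\<L>\<close> are given by coordinate families \<open>s :: nat \<Rightarrow> nat \<Rightarrow> 'a\<close>,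
  where \<open>s k i\<close> is \<open>b_{k,i}\<close> (1 \<le> k \<le> n, 0 \<le> i \<le> k-1).  The associated
  n x n matrix (0-based indices in Jordan_Normal_Form): the entry in 1-based row
  \<open>i-k+n+1\<close>, column \<open>k\<close> is \<open>b_{k,i}\<close>, entries above are 0.\<close>

definition L_mat :: "nat \<Rightarrow> (nat \<Rightarrow> nat \<Rightarrow> 'a::zero) \<Rightarrow> 'a mat" where
  "L_mat n s = mat n n (\<lambda>(r, c).
      if n \<le> r + c + 1 then s (c + 1) (r + c + 1 - n) else 0)"

definition L_idx :: "nat \<Rightarrow> (nat \<times> nat) set" where
  "L_idx n = {(k, i). 1 \<le> k \<and> k \<le> n \<and> i < k}"

definition L_set :: "nat \<Rightarrow> (nat \<Rightarrow> nat \<Rightarrow> 'a::zero) set" where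
  "L_set n = {s. \<forall>k. 1 \<le> k \<and> k \<le> n \<longrightarrow> s k 0 \<noteq> 0}"

definition J_poly :: "nat \<Rightarrow> nat \<Rightarrow> nat \<Rightarrow> 'a::comm_ring_1 mat \<Rightarrow> 'a" where
  "J_poly n k i X = det (mat k k (\<lambda>(r, c).
      if r < k - i then X $$ (n - k + i + r, c)
      else adj_mat X $$ (n - i + (r - (k - i)), c)))"

definition var_less :: "nat \<times> nat \<Rightarrow> nat \<times> nat \<Rightarrow> bool" where
  "var_less ab ki = (case ab of (a, b) \<Rightarrow> case ki of (k, i) \<Rightarrow>
      (b = 0 \<and> i = 0 \<and> a < k) \<or> (b = 0 \<and> i \<noteq> 0) \<or>
      (b \<noteq> 0 \<and> i \<noteq> 0 \<and> (a < k \<or> (a = k \<and> i < b))))"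

inductive_set poly_fun :: "(nat \<times> nat) set \<Rightarrow> ((nat \<Rightarrow> nat \<Rightarrow> 'a::comm_ring_1) \<Rightarrow> 'a) set"
  for V where
  const: "(\<lambda>s. c) \<in> poly_fun V"
| var: "(a, b) \<in> V \<Longrightarrow> (\<lambda>s. s a b) \<in> poly_fun V"
| add: "p \<in> poly_fun V \<Longrightarrow> q \<in> poly_fun V \<Longrightarrow> (\<lambda>s. p s + q s) \<in> poly_fun V"
| mult: "p \<in> poly_fun V \<Longrightarrow> q \<in> poly_fun V \<Longrightarrow> (\<lambda>s. p s * q s) \<in> poly_fun V"

end

theory Submission imports Defs begin

lemma pf_sum: "finite S \<Longrightarrow> (\<And>x. x \<in> S \<Longrightarrow> (\<lambda>s. f x s) \<in> poly_fun V) \<Longrightarrow> (\<lambda>s. \<Sum>x\<in>S. f x s) \<in> poly_fun V"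
proof (induction S rule: finite_induct)
  case empty then show ?case using poly_fun.const[of 0] by simp
next
  case (insert x F) then show ?case using poly_fun.add[of "f x" V "\<lambda>s. \<Sum>x\<in>F. f x s"] by simp
qed

lemma pf_prod: "finite S \<Longrightarrow> (\<And>x. x \<in> S \<Longrightarrow> (\<lambda>s. f x s) \<in> poly_fun V) \<Longrightarrow> (\<lambda>s. \<Prod>x\<in>S. f x s) \<in> poly_fun V"
proof (induction S rule: finite_induct)
  case empty then show ?case using poly_fun.const[of 1] by simp
next
  case (insert x F) then show ?case using poly_fun.mult[of "f x" V "\<lambda>s. \<Prod>x\<in>F. f x s"] by simp
qed

lemma pf_pow: "p \<in> poly_fun V \<Longrightarrow> (\<lambda>s. p s ^ e) \<in> poly_fun V"
  using pf_prod[of "{..<e}" "\<lambda>_ s. p s" V] by simp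

lemma pf_cmult: "p \<in> poly_fun V \<Longrightarrow> (\<lambda>s. c * p s) \<in> poly_fun V"
  using poly_fun.mult[OF poly_fun.const[of c] ] by blast

lemma pf_mult: "p \<in> poly_fun V \<Longrightarrow> q \<in> poly_fun V \<Longrightarrow> (\<lambda>s. p s * q s) \<in> poly_fun V"
  by (rule poly_fun.mult)

lemma pf_det:
  assumes "\<And>r c. r < m \<Longrightarrow> c < m \<Longrightarrow> (\<lambda>s. E s r c) \<in> poly_fun V"
  shows "(\<lambda>s. det (mat m m (\<lambda>(r,c). E s r c))) \<in> poly_fun V"
proof -
  have fin: "finite {p. p permutes {0..<m}}" by (simp add: finite_permutations)
  have "(\<lambda>s. \<Sum>p\<in>{p. p permutes {0..<m}}. signof p * (\<Prod>i = 0..<m. E s i (p i))) \<in> poly_fun V"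
  proof (rule pf_sum[OF fin])
    fix p assume p: "p \<in> {p. p permutes {0..<m}}"
    show "(\<lambda>s. signof p * (\<Prod>i = 0..<m. E s i (p i))) \<in> poly_fun V"
      apply (rule pf_cmult, rule pf_prod, simp)
      using p assms permutes_in_image[of p "{0..<m}"] by auto
  qed
  moreover have "\<And>s. det (mat m m (\<lambda>(r,c). E s r c)) = (\<Sum>p\<in>{p. p permutes {0..<m}}. signof p * (\<Prod>i = 0..<m. E s i (p i)))"
    apply (subst det_def'[of _ m], simp)
    apply (rule sum.cong, simp)
    apply (rule arg_cong[where f="\<lambda>x. _ * x"])
    apply (rule prod.cong, simp)
    using permutes_in_image by fastforce
  ultimately show ?thesis by simp
qed

lemma mat_delete_mat: "mat_delete (mat m m f) i j = mat (m-1) (m-1) (\<lambda>(r,c). f (if r < i then r else Suc r, if c < j then c else Suc c))"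
  by (rule eq_matI, auto simp: mat_delete_def)

lemma pf_cofactor:
  assumes "\<And>r c. r < m \<Longrightarrow> c < m \<Longrightarrow> r \<noteq> i \<Longrightarrow> (\<lambda>s. E s r c) \<in> poly_fun V" and "i < m"
  shows "(\<lambda>s. cofactor (mat m m (\<lambda>(r,c). E s r c)) i j) \<in> poly_fun V"
proof -
  have eq: "\<And>s. cofactor (mat m m (\<lambda>(r,c). E s r c)) i j = (-1)^(i+j) * det (mat (m-1) (m-1) (\<lambda>(r,c). E s (if r < i then r else Suc r) (if c < j then c else Suc c)))"
    unfolding cofactor_def mat_delete_mat by (simp add: case_prod_beta)
  have "(\<lambda>s. det (mat (m-1) (m-1) (\<lambda>(r,c). E s (if r < i then r else Suc r) (if c < j then c else Suc c)))) \<in> poly_fun V"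
    apply (rule pf_det)
    using assms by (auto split: if_splits)
  then show ?thesis unfolding eq by (rule pf_cmult)
qed

definition rv :: "nat \<Rightarrow> nat \<Rightarrow> nat" where "rv m r = (if r < m then m - 1 - r else r)"

lemma rv_permutes: "rv m permutes {0..<m}"
  apply (rule bij_imp_permutes)
   apply (rule bij_betw_byWitness[where f'="rv m"])
  by (auto simp: rv_def)

lemma signof_sq: "(signof p :: 'a :: ring_1) * signof p = 1"
  by (simp add: sign_def)

lemma signof_nz: "(signof p :: 'a :: ring_1) \<noteq> 0"
  by (simp add: sign_def)

lemma prod_diag: "prod_list (diag_mat (A :: 'a :: comm_ring_1 mat)) = (\<Prod>r<dim_row A. A $$ (r,r))"
  unfolding diag_mat_def
  by (simp add: prod.distinct_set_conv_list[symmetric] atLeast0LessThan)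

lemma det_rev:
  assumes A: "A \<in> carrier_mat m m"
  shows "det A = signof (rv m) * det (mat m m (\<lambda>(i,j). A $$ (rv m i, j)))"
  using det_permute_rows[OF A rv_permutes[of m]] signof_sq[of "rv m"]
  by (metis (no_types, lifting) mult.assoc mult_1)

lemma det_anti1:
  assumes A: "(A :: 'a :: comm_ring_1 mat) \<in> carrier_mat m m"
  and z: "\<And>r c. r < m \<Longrightarrow> c < m \<Longrightarrow> r + c + 1 < m \<Longrightarrow> A $$ (r,c) = 0"
  shows "det A = signof (rv m) * (\<Prod>r<m. A $$ (m-1-r, r))"
proof -
  let ?B = "mat m m (\<lambda>(i,j). A $$ (rv m i, j))"
  have "det ?B = prod_list (diag_mat ?B)"
    apply (rule det_upper_triangular[of _ m])
     apply (rule upper_triangularI)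
    using z by (auto simp: rv_def)
  also have "\<dots> = (\<Prod>r<m. A $$ (m-1-r, r))" unfolding prod_diag by (simp add: rv_def)
  finally show ?thesis using det_rev[OF A] by simp
qed

lemma det_anti2:
  assumes A: "(A :: 'a :: comm_ring_1 mat) \<in> carrier_mat m m"
  and z: "\<And>r c. r < m \<Longrightarrow> c < m \<Longrightarrow> r + c + 1 > m \<Longrightarrow> A $$ (r,c) = 0"
  shows "det A = signof (rv m) * (\<Prod>r<m. A $$ (m-1-r, r))"
proof -
  let ?B = "mat m m (\<lambda>(i,j). A $$ (rv m i, j))"
  have "det ?B = prod_list (diag_mat ?B)"
    apply (rule det_lower_triangular[of m])
    using z by (auto simp: rv_def)
  also have "\<dots> = (\<Prod>r<m. A $$ (m-1-r, r))" unfolding prod_diag by (simp add: rv_def)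
  finally show ?thesis using det_rev[OF A] by simp
qed

lemma adj_anti:
  fixes X :: "'a::field mat"
  assumes X: "X \<in> carrier_mat n n"
  and z: "\<And>r c. r < n \<Longrightarrow> c < n \<Longrightarrow> r + c + 1 < n \<Longrightarrow> X $$ (r,c) = 0"
  and nz: "\<And>j. j < n \<Longrightarrow> X $$ (n-1-j, j) \<noteq> 0"
  shows "j \<le> m \<Longrightarrow> m < n \<Longrightarrow> (j < m \<longrightarrow> adj_mat X $$ (m, n-1-j) = 0) \<and> (j = m \<longrightarrow> adj_mat X $$ (m, n-1-m) * X $$ (n-1-m, m) = det X)"
proof (induction j arbitrary: m rule: less_induct)
  case (less j)
  define Y where "Y = adj_mat X"
  have Y: "Y \<in> carrier_mat n n" unfolding Y_def using adj_mat(1)[OF X] .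
  have jn: "j < n" using less by simp
  have "(Y * X) $$ (m,j) = (det X \<cdot>\<^sub>m 1\<^sub>m n) $$ (m,j)" unfolding Y_def using adj_mat(3)[OF X] by simp
  also have "\<dots> = (if m = j then det X else 0)" using less jn by simp
  finally have e1: "(Y * X) $$ (m,j) = (if m = j then det X else 0)" .
  have "(Y * X) $$ (m,j) = (\<Sum>c\<in>{0..<n}. Y $$ (m,c) * X $$ (c,j))"
    using X Y less jn by (simp add: scalar_prod_def)
  also have "\<dots> = Y $$ (m, n-1-j) * X $$ (n-1-j, j) + (\<Sum>c\<in>{0..<n} - {n-1-j}. Y $$ (m,c) * X $$ (c,j))"
    by (rule sum.remove, simp, use jn in simp)
  also have "(\<Sum>c\<in>{0..<n} - {n-1-j}. Y $$ (m,c) * X $$ (c,j)) = 0"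
  proof (rule sum.neutral, rule ballI)
    fix c assume c: "c \<in> {0..<n} - {n-1-j}"
    show "Y $$ (m,c) * X $$ (c,j) = 0"
    proof (cases "c < n-1-j")
      case True then show ?thesis using z[of c j] c jn by auto
    next
      case False
      then have "n-1-c < j" using c jn by auto
      moreover have cc: "n - 1 - (n-1-c) = c" using c by auto
      ultimately have "Y $$ (m,c) = 0" using less.IH[of "n-1-c" m] less.prems unfolding Y_def by auto
      then show ?thesis by simp
    qed
  qed
  finally have e2: "(Y * X) $$ (m,j) = Y $$ (m, n-1-j) * X $$ (n-1-j, j)" by simp
  show ?case using e1 e2 nz[OF jn] unfolding Y_def by auto
qed

lemma LX: "L_mat n s \<in> carrier_mat n n" unfolding L_mat_def by simp

lemma L_entry: "r < n \<Longrightarrow> c < n \<Longrightarrow> L_mat n s $$ (r,c) = (if n \<le> r+c+1 then s (c+1) (r+c+1-n) else 0)"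
  unfolding L_mat_def by simp

lemma L_det: "det (L_mat n s) = signof (rv n) * (\<Prod>r<n. s (r+1) 0)"
  apply (subst det_anti1[OF LX])
   apply (simp add: L_entry)
  apply (rule arg_cong[where f="\<lambda>x. _ * x"])
  apply (rule prod.cong, simp)
  by (simp add: L_entry)

lemma J0: assumes "1 \<le> k" "k \<le> n"
  shows "J_poly n k 0 (L_mat n (s :: nat \<Rightarrow> nat \<Rightarrow> 'a :: field)) = signof (rv k) * (\<Prod>r<k-1. s (r+1) 0) * s k 0"
proof -
  have "J_poly n k 0 (L_mat n s) = det (mat k k (\<lambda>(r,c). L_mat n s $$ (n - k + r, c)))"
    unfolding J_poly_def by (rule arg_cong[where f=det], rule eq_matI, auto)
  also have "\<dots> = signof (rv k) * (\<Prod>r<k. s (r+1) 0)"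
    apply (subst det_anti1[of _ k])
      apply simp
    using assms apply (simp add: L_entry)
    apply (rule arg_cong[where f="\<lambda>x. _ * x"])
    apply (rule prod.cong, simp)
    using assms by (simp add: L_entry)
  also have "\<dots> = signof (rv k) * (\<Prod>r<k-1. s (r+1) 0) * s k 0"
    using assms by (cases k, auto)
  finally show ?thesis .
qed

definition rot :: "nat \<Rightarrow> nat \<Rightarrow> nat \<Rightarrow> nat" where
  "rot k i r = (if r < i then r + (k - i) else if r < k then r - i else r)"

lemma rot_permutes: "i \<le> k \<Longrightarrow> rot k i permutes {0..<k}"
  apply (rule bij_imp_permutes)
   apply (rule bij_betw_byWitness[where f'="\<lambda>r. if r < k - i then r + i else if r < k then r - (k - i) else r"])
  by (auto simp: rot_def)

definition A2s :: "nat \<Rightarrow> nat \<Rightarrow> (nat \<Rightarrow> nat \<Rightarrow> 'a::zero) \<Rightarrow> 'a mat" where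
  "A2s k i s = mat (k-i) (k-i) (\<lambda>(r,c). if k \<le> 2*i+r+c+1 then s (i+c+1) (2*i+r+c+1-k) else 0)"

lemma Jpos:
  fixes s :: "nat \<Rightarrow> nat \<Rightarrow> 'a :: field"
  assumes i: "1 \<le> i" "i < k" "k \<le> n" and sL: "s \<in> L_set n"
  shows "J_poly n k i (L_mat n s) = signof (rot k i) * signof (rv i) * det (L_mat n s) ^ i
     / (\<Prod>r<i. s (n-r) 0) * det (A2s k i s)"
proof -
  define X where "X = L_mat n s"
  define Y where "Y = adj_mat X"
  have X: "X \<in> carrier_mat n n" unfolding X_def by (rule LX)
  have Xz: "\<And>r c. r < n \<Longrightarrow> c < n \<Longrightarrow> r + c + 1 < n \<Longrightarrow> X $$ (r,c) = 0"
    unfolding X_def by (simp add: L_entry)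
  have Xd: "\<And>j. j < n \<Longrightarrow> X $$ (n-1-j, j) = s (j+1) 0"
    unfolding X_def by (simp add: L_entry)
  have Xnz: "\<And>j. j < n \<Longrightarrow> X $$ (n-1-j, j) \<noteq> 0"
  proof -
    fix j assume j: "j < n"
    have "s (j+1) 0 \<noteq> 0" using sL j unfolding L_set_def by auto
    then show "X $$ (n-1-j, j) \<noteq> 0" using Xd[OF j] by simp
  qed
  note adj = adj_anti[OF X Xz Xnz, folded Y_def]
  have Yz: "\<And>m c. m < n \<Longrightarrow> c < n \<Longrightarrow> n - 1 - c < m \<Longrightarrow> Y $$ (m, c) = 0"
  proof -
    fix m c assume a: "m < n" "c < n" "n - 1 - c < m"
    have "n - 1 - (n-1-c) = c" using a by auto
    then show "Y $$ (m, c) = 0" using adj[of "n-1-c" m] a by auto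
  qed
  have Yd: "\<And>r. r < n \<Longrightarrow> Y $$ (n-1-r, r) = det X / s (n-r) 0"
  proof -
    fix r assume r: "r < n"
    have "Y $$ (n-1-r, r) * X $$ (r, n-1-r) = det X" using adj[of "n-1-r" "n-1-r"] r
      by (simp add: Suc_diff_Suc)
    moreover have "X $$ (r, n-1-r) = s (n-r) 0" using Xd[of "n-1-r"] r by (simp add: Suc_diff_Suc)
    moreover have "s (n-r) 0 \<noteq> 0" using sL r unfolding L_set_def by auto
    ultimately show "Y $$ (n-1-r, r) = det X / s (n-r) 0" by (simp add: field_simps)
  qed
  define M where "M = mat k k (\<lambda>(r, c). if r < k - i then X $$ (n - k + i + r, c)
      else Y $$ (n - i + (r - (k - i)), c))"
  have JM: "J_poly n k i X = det M" unfolding J_poly_def M_def Y_def ..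
  define B1 where "B1 = mat i i (\<lambda>(r,c). Y $$ (n-i+r, c))"
  define A1 where "A1 = mat (k-i) i (\<lambda>(r,c). X $$ (n-k+i+r, c))"
  define A2 where "A2 = A2s k i s"
  have M: "M \<in> carrier_mat k k" unfolding M_def by simp
  have "det (mat k k (\<lambda>(r,c). M $$ (rot k i r, c))) = signof (rot k i) * det M"
    by (rule det_permute_rows[OF M rot_permutes], use i in simp)
  hence dM: "det M = signof (rot k i) * det (mat k k (\<lambda>(r,c). M $$ (rot k i r, c)))"
    using signof_sq[of "rot k i"] by (metis (no_types, lifting) mult.assoc mult_1)
  have eqM: "mat k k (\<lambda>(r,c). M $$ (rot k i r, c)) = four_block_mat B1 (0\<^sub>m i (k-i)) A1 A2"
  proof (rule eq_matI)
    show "dim_row (mat k k (\<lambda>(r,c). M $$ (rot k i r, c))) = dim_row (four_block_mat B1 (0\<^sub>m i (k-i)) A1 A2)"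
      using i by (simp add: B1_def A2_def A2s_def)
    show "dim_col (mat k k (\<lambda>(r,c). M $$ (rot k i r, c))) = dim_col (four_block_mat B1 (0\<^sub>m i (k-i)) A1 A2)"
      using i by (simp add: B1_def A2_def A2s_def)
    fix r c assume rc: "r < dim_row (four_block_mat B1 (0\<^sub>m i (k-i)) A1 A2)" "c < dim_col (four_block_mat B1 (0\<^sub>m i (k-i)) A1 A2)"
    hence r: "r < k" and c: "c < k" using i by (auto simp: B1_def A2_def A2s_def)
    have L: "mat k k (\<lambda>(r,c). M $$ (rot k i r, c)) $$ (r,c) = M $$ (rot k i r, c)" using r c by simp
    have rk: "rot k i r < k" using r i by (auto simp: rot_def)
    show "mat k k (\<lambda>(r,c). M $$ (rot k i r, c)) $$ (r,c) = four_block_mat B1 (0\<^sub>m i (k-i)) A1 A2 $$ (r,c)"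
    proof (cases "r < i")
      case True
      have rr: "rot k i r = r + (k - i)" using True by (simp add: rot_def)
      have Mv: "M $$ (rot k i r, c) = Y $$ (n - i + r, c)" unfolding M_def rr using r c True i by auto
      show ?thesis
      proof (cases "c < i")
        case True2: True
        then show ?thesis unfolding L Mv using rc True by (simp add: B1_def A2_def A2s_def)
      next
        case False
        have "Y $$ (n - i + r, c) = 0" by (rule Yz, use i r c False True in auto)
        then show ?thesis unfolding L Mv using rc True False by (simp add: B1_def A2_def A2s_def)
      qed
    next
      case False
      have rr: "rot k i r = r - i" using False r by (simp add: rot_def)
      have Mv: "M $$ (rot k i r, c) = X $$ (n - k + r, c)" unfolding M_def rr using r c False i by auto
      show ?thesis
      proof (cases "c < i")
        case True2: True
        then show ?thesis unfolding L Mv using rc False i r by (simp add: B1_def A1_def A2_def A2s_def)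
      next
        case False2: False
        have "X $$ (n - k + r, c) = (if k \<le> 2*i+(r-i)+(c-i)+1 then s (i+(c-i)+1) (2*i+(r-i)+(c-i)+1-k) else 0)"
          unfolding X_def using i r c False False2 by (auto simp: L_entry)
        then show ?thesis unfolding L Mv using rc False False2 i r c by (simp add: B1_def A1_def A2_def A2s_def)
      qed
    qed
  qed
  have d4: "det (mat k k (\<lambda>(r,c). M $$ (rot k i r, c))) = det B1 * det A2"
    unfolding eqM
    by (rule det_four_block_mat_upper_right_zero, auto simp: B1_def A1_def A2_def A2s_def)
  have dB0: "det B1 = signof (rv i) * (\<Prod>r<i. B1 $$ (i-1-r, r))"
  proof (rule det_anti2)
    show "B1 \<in> carrier_mat i i" by (simp add: B1_def)
    fix r c assume rc: "r < i" "c < i" "i < r + c + 1"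
    show "B1 $$ (r, c) = 0" unfolding B1_def using rc i by (simp, intro Yz, auto)
  qed
  have "(\<Prod>r<i. B1 $$ (i-1-r, r)) = (\<Prod>r<i. det X / s (n-r) 0)"
  proof (rule prod.cong, simp)
    fix r assume "r \<in> {..<i}"
    hence r: "r < i" by simp
    have e: "n - i + (i-1-r) = n-1-r" using r i by arith
    have "B1 $$ (i-1-r, r) = Y $$ (n - i + (i-1-r), r)" unfolding B1_def using r i by simp
    also have "\<dots> = Y $$ (n-1-r, r)" unfolding e ..
    finally have "B1 $$ (i-1-r, r) = Y $$ (n-1-r, r)" .
    then show "B1 $$ (i-1-r, r) = det X / s (n-r) 0" using Yd[of r] r i by simp
  qed
  hence dB: "det B1 = signof (rv i) * (det X ^ i / (\<Prod>r<i. s (n-r) 0))"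
    using dB0 by (simp add: prod_dividef)
  have "J_poly n k i X = signof (rot k i) * (signof (rv i) * (det X ^ i / (\<Prod>r<i. s (n-r) 0)) * det A2)"
    using JM dM d4 dB by simp
  then show ?thesis unfolding X_def A2_def by (simp add: divide_inverse ac_simps)
qed

lemma A2_lap:
  assumes "i < k"
  shows "det (A2s k i s) = s k i * cofactor (A2s k i s) 0 (k-i-1) + (\<Sum>j<k-i-1. A2s k i s $$ (0,j) * cofactor (A2s k i s) 0 j)"
proof -
  have "det (A2s k i s) = (\<Sum>j<k-i. A2s k i s $$ (0,j) * cofactor (A2s k i s) 0 j)"
    by (rule laplace_expansion_row, auto simp: A2s_def assms)
  also have "\<dots> = A2s k i s $$ (0,k-i-1) * cofactor (A2s k i s) 0 (k-i-1) + (\<Sum>j<k-i-1. A2s k i s $$ (0,j) * cofactor (A2s k i s) 0 j)"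
  proof -
    obtain q where q: "k - i = Suc q" using assms by (metis Suc_diff_Suc)
    have qq: "k - i - 1 = q" using q by simp
    show ?thesis unfolding qq q by (simp add: sum.lessThan_Suc)
  qed
  also have "A2s k i s $$ (0,k-i-1) = s k i" using assms unfolding A2s_def by auto
  finally show ?thesis .
qed

lemma pf_ite: "(P \<Longrightarrow> (a,b) \<in> V) \<Longrightarrow> (\<lambda>s. if P then s a b else 0) \<in> poly_fun V"
  by (cases P, auto intro: poly_fun.intros)

lemma A2_entries:
  assumes "1 \<le> i" "i < k" "k \<le> n" "r < k - i" "c < k - i" "r \<noteq> 0 \<or> c < k - i - 1"
  shows "(\<lambda>s. if k \<le> 2*i+r+c+1 then s (i+c+1) (2*i+r+c+1-k) else (0::'a::comm_ring_1)) \<in> poly_fun {ab \<in> L_idx n. var_less ab (k, i)}"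
  apply (rule pf_ite)
  using assms by (auto simp: L_idx_def var_less_def)

lemma C_witness:
  assumes "1 \<le> i" "i < k"
  shows "cofactor (A2s k i (\<lambda>a b. if b = 0 \<or> b = i then 1 else 0)) 0 (k-i-1) \<noteq> (0 :: 'a :: field_char_0)"
proof -
  define s0 :: "nat \<Rightarrow> nat \<Rightarrow> 'a" where "s0 = (\<lambda>a b. if b = 0 \<or> b = i then 1 else 0)"
  define m where "m = k - i - 1"
  define D where "D = mat_delete (A2s k i s0) 0 m"
  have D: "D \<in> carrier_mat m m" unfolding D_def m_def A2s_def by (simp add: mat_delete_def)
  have De: "\<And>r c. r < m \<Longrightarrow> c < m \<Longrightarrow> D $$ (r,c) = (if k \<le> 2*i+r+c+2 then s0 (i+c+1) (2*i+r+c+2-k) else 0)"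
    unfolding D_def A2s_def mat_delete_def m_def by auto
  have "det D = signof (rv m) * (\<Prod>r<m. D $$ (m-1-r, r))"
  proof (rule det_anti2[OF D])
    fix r c assume rc: "r < m" "c < m" "m < r + c + 1"
    show "D $$ (r,c) = 0" using rc assms by (simp add: De s0_def m_def) arith
  qed
  also have "(\<Prod>r<m. D $$ (m-1-r, r)) = 1"
    by (rule prod.neutral, use assms in \<open>auto simp: De s0_def m_def\<close>)
  finally have "det D \<noteq> 0" by (simp add: signof_nz)
  then show ?thesis unfolding cofactor_def D_def m_def s0_def by simp
qed

theorem proposition2:
  fixes n :: nat and k i :: nat
  assumes "n \<ge> 1" and "(k, i) \<in> L_idx n"
  shows "\<exists>p1 q1 p2 q2 :: (nat \<Rightarrow> nat \<Rightarrow> 'a::field_char_0) \<Rightarrow> 'a.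
           p1 \<in> poly_fun {ab \<in> L_idx n. var_less ab (k, i)} \<and>
           q1 \<in> poly_fun {ab \<in> L_idx n. var_less ab (k, i)} \<and>
           p2 \<in> poly_fun {ab \<in> L_idx n. var_less ab (k, i)} \<and>
           q2 \<in> poly_fun {ab \<in> L_idx n. var_less ab (k, i)} \<and>
           (\<exists>s \<in> L_set n. q1 s \<noteq> 0) \<and>
           (\<exists>s \<in> L_set n. q2 s \<noteq> 0) \<and>
           (\<exists>s \<in> L_set n. q1 s \<noteq> 0 \<and> p1 s \<noteq> 0) \<and>
           (\<forall>s \<in> L_set n. q1 s \<noteq> 0 \<longrightarrow> q2 s \<noteq> 0 \<longrightarrow>
              J_poly n k i (L_mat n s) = p1 s / q1 s * s k i + p2 s / q2 s)"
proof -
  from assms(2) have k: "1 \<le> k" "k \<le> n" "i < k" by (auto simp: L_idx_def)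
  define V where "V = {ab \<in> L_idx n. var_less ab (k, i)}"
  show ?thesis
  proof (cases "i = 0")
    case True
    define p1 :: "(nat \<Rightarrow> nat \<Rightarrow> 'a) \<Rightarrow> 'a" where "p1 = (\<lambda>s. signof (rv k) * (\<Prod>r<k-1. s (r+1) 0))"
    have P1: "p1 \<in> poly_fun V" unfolding p1_def
      apply (rule pf_cmult, rule pf_prod, simp)
      apply (rule poly_fun.var)
      using k True by (auto simp: V_def L_idx_def var_less_def)
    have s1: "(\<lambda>a b. 1::'a) \<in> L_set n" by (simp add: L_set_def)
    have W: "p1 (\<lambda>a b. 1::'a) \<noteq> 0" by (simp add: p1_def signof_nz)
    show ?thesis
      apply (rule exI[of _ p1], rule exI[of _ "\<lambda>s. 1"], rule exI[of _ "\<lambda>s. 0"], rule exI[of _ "\<lambda>s. 1"])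
      apply (intro conjI)
      using P1 apply (simp add: V_def)
         apply (rule poly_fun.const)
        apply (rule poly_fun.const)
       apply (rule poly_fun.const)
      using s1 apply (intro bexI[of _ "\<lambda>a b. 1::'a"], simp, assumption)
      using s1 apply (intro bexI[of _ "\<lambda>a b. 1::'a"], simp, assumption)
        apply (rule bexI[of _ "\<lambda>a b. 1::'a"])
         apply (simp add: W)
        apply (rule s1)
      unfolding p1_def True by (simp only: div_by_1 add_0_right div_0 J0[OF k(1,2)] simp_thms ball_simps) simp
  next
    case False
    hence i1: "1 \<le> i" by simp
    define K :: "(nat \<Rightarrow> nat \<Rightarrow> 'a) \<Rightarrow> 'a" where
      "K = (\<lambda>s. signof (rot k i) * signof (rv i) * (signof (rv n) * (\<Prod>r<n. s (r+1) 0)) ^ i)"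
    define Q :: "(nat \<Rightarrow> nat \<Rightarrow> 'a) \<Rightarrow> 'a" where "Q = (\<lambda>s. \<Prod>r<i. s (n-r) 0)"
    define C :: "(nat \<Rightarrow> nat \<Rightarrow> 'a) \<Rightarrow> 'a" where "C = (\<lambda>s. cofactor (A2s k i s) 0 (k-i-1))"
    define R :: "(nat \<Rightarrow> nat \<Rightarrow> 'a) \<Rightarrow> 'a" where
      "R = (\<lambda>s. \<Sum>j<k-i-1. A2s k i s $$ (0,j) * cofactor (A2s k i s) 0 j)"
    have PK: "K \<in> poly_fun V" unfolding K_def
      apply (rule pf_cmult, rule pf_pow, rule pf_cmult, rule pf_prod, simp)
      apply (rule poly_fun.var)
      using k i1 by (auto simp: V_def L_idx_def var_less_def)
    have PQ: "Q \<in> poly_fun V" unfolding Q_def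
      apply (rule pf_prod, simp)
      apply (rule poly_fun.var)
      using k i1 by (auto simp: V_def L_idx_def var_less_def)
    have Pcof: "(\<lambda>s. cofactor (A2s k i s) 0 j) \<in> poly_fun V" for j
      unfolding A2s_def
      apply (rule pf_cofactor)
      using A2_entries[OF i1 k(3) k(2)] k unfolding V_def by auto
    have PC: "C \<in> poly_fun V" unfolding C_def by (rule Pcof)
    have PR: "R \<in> poly_fun V" unfolding R_def
    proof (rule pf_sum, simp)
      fix j assume j: "j \<in> {..<k-i-1}"
      have e: "\<And>s. A2s k i s $$ (0,j) = (if k \<le> 2*i+0+j+1 then s (i+j+1) (2*i+0+j+1-k) else (0::'a))"
        using j by (simp add: A2s_def)
      have P0: "(\<lambda>s. if k \<le> 2*i+0+j+1 then s (i+j+1) (2*i+0+j+1-k) else (0::'a)) \<in> poly_fun V"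
        unfolding V_def by (rule A2_entries[OF i1 k(3) k(2)], use j in auto)
      show "(\<lambda>s::nat \<Rightarrow> nat \<Rightarrow> 'a. A2s k i s $$ (0,j) * cofactor (A2s k i s) 0 j) \<in> poly_fun V"
      proof -
        have e2: "(\<lambda>s. A2s k i s $$ (0,j) * cofactor (A2s k i s) 0 j) = (\<lambda>s. (if k \<le> 2*i+0+j+1 then s (i+j+1) (2*i+0+j+1-k) else (0::'a)) * cofactor (A2s k i s) 0 j)"
          by (rule ext, subst e, rule refl)
        show ?thesis unfolding e2 by (rule pf_mult[OF P0 Pcof[of j]])
      qed
    qed
    define s0 :: "nat \<Rightarrow> nat \<Rightarrow> 'a" where "s0 = (\<lambda>a b. if b = 0 \<or> b = i then 1 else 0)"
    have s0L: "s0 \<in> L_set n" by (simp add: L_set_def s0_def)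
    have Q0: "Q s0 = 1" unfolding Q_def s0_def by simp
    have K0: "K s0 \<noteq> 0" unfolding K_def s0_def by (simp add: signof_nz)
    have C0: "C s0 \<noteq> 0" unfolding C_def s0_def by (rule C_witness[OF i1 k(3)])
    have ID: "J_poly n k i (L_mat n s) = (K s * C s) / Q s * s k i + (K s * R s) / Q s" if s: "s \<in> L_set n" for s
    proof -
      have "J_poly n k i (L_mat n s) = K s / Q s * (s k i * C s + R s)"
        unfolding Jpos[OF i1 k(3) k(2) s] A2_lap[OF k(3)] L_det K_def Q_def C_def R_def by (simp only: mult.assoc)
      also have "\<dots> = (K s * C s) / Q s * s k i + (K s * R s) / Q s"
        by (simp only: distrib_left times_divide_eq_left times_divide_eq_right mult.commute mult.left_commute)
      finally show ?thesis .
    qed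
    show ?thesis
      apply (rule exI[of _ "\<lambda>s. K s * C s"], rule exI[of _ Q], rule exI[of _ "\<lambda>s. K s * R s"], rule exI[of _ Q])
      apply (intro conjI)
      using pf_mult[OF PK PC] apply (simp add: V_def)
      using PQ apply (simp add: V_def)
      using pf_mult[OF PK PR] apply (simp add: V_def)
      using PQ apply (simp add: V_def)
        apply (rule bexI[of _ s0], simp add: Q0, rule s0L)
       apply (rule bexI[of _ s0], simp add: Q0, rule s0L)
      apply (rule bexI[of _ s0], simp add: Q0 K0 C0, rule s0L)
      by (intro ballI impI ID)
  qed
qed
end
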